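(* For a connected graph $G=(V,E)$ with $|V|=n$ and $1\le k\le n$, \[Z_{\mu^*_k}\le\binom{n-1}{k-1}T(G)\le n^{k-1}T(G),\] where $T(G)$ is the number of spanning trees of $G$.
   Context: $Z_{\mu^*_k}=\sum_{\{P_1,\dots,P_k\}}\prod_{i=1}^kT(P_i)$, the sum over partitions of $V$ into $k$ nonempty parts, where $T(P_i)$ is the number of spanning trees of the induced subgraph $G[P_i]$ (zero if $G[P_i]$ is disconnected); equivalently, the number of forests of $G$ with exactly $n-k$ edges. *)

theory Defs
  imports Main "HOL-Library.Disjoint_Sets"
begin

definition simple_graph :: "'a set \<Rightarrow> 'a set set \<Rightarrow> bool" where
  "simple_graph V E \<longleftrightarrow> finite V \<and> (\<forall>e\<in>E. e \<subseteq> V \<and> card e = 2)"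

definition adj :: "'a set set \<Rightarrow> 'a \<Rightarrow> 'a \<Rightarrow> bool" where
  "adj F u v \<longleftrightarrow> {u, v} \<in> F"

definition graph_connected :: "'a set \<Rightarrow> 'a set set \<Rightarrow> bool" where
  "graph_connected V F \<longleftrightarrow> V \<noteq> {} \<and>
     (\<forall>u\<in>V. \<forall>v\<in>V. (\<lambda>x y. x \<in> V \<and> y \<in> V \<and> adj F x y)\<^sup>*\<^sup>* u v)"

definition has_cycle :: "'a set set \<Rightarrow> bool" where
  "has_cycle F \<longleftrightarrow> (\<exists>vs. length vs \<ge> 3 \<and> distinct vs \<and>
     (\<forall>i < length vs - 1. adj F (vs ! i) (vs ! Suc i)) \<and> adj F (last vs) (hd vs))"

definition spanning_tree_of :: "'a set set \<Rightarrow> 'a set \<Rightarrow> 'a set set \<Rightarrow> bool" where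
  "spanning_tree_of E P F \<longleftrightarrow> F \<subseteq> {e \<in> E. e \<subseteq> P} \<and> graph_connected P F \<and> \<not> has_cycle F"

text \<open>T(G[P]): number of spanning trees of the induced subgraph G[P]
  (zero if G[P] is disconnected).\<close>
definition num_spanning_trees :: "'a set set \<Rightarrow> 'a set \<Rightarrow> nat" where
  "num_spanning_trees E P = card {F. spanning_tree_of E P F}"

definition Z_mu_star :: "'a set \<Rightarrow> 'a set set \<Rightarrow> nat \<Rightarrow> nat" where
  "Z_mu_star V E k = (\<Sum>\<P> \<in> {\<P>. partition_on V \<P> \<and> card \<P> = k}.
       \<Prod>P\<in>\<P>. num_spanning_trees E P)"

end

theory Submission
  imports Defs "HOL-Library.Transitive_Closure_Table" "HOL-Library.FuncSet"
begin


definition reach :: "'a set \<Rightarrow> 'a set set \<Rightarrow> 'a \<Rightarrow> 'a \<Rightarrow> bool" where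
  "reach V F = (\<lambda>x y. x \<in> V \<and> y \<in> V \<and> adj F x y)\<^sup>*\<^sup>*"

lemma graph_connected_reach: "graph_connected V F \<longleftrightarrow> V \<noteq> {} \<and> (\<forall>u\<in>V. \<forall>v\<in>V. reach V F u v)"
  unfolding graph_connected_def reach_def by simp

lemma adj_sym: "adj F x y \<longleftrightarrow> adj F y x"
  unfolding adj_def by (simp add: insert_commute)

lemma reach_refl[simp]: "reach V F u u"
  unfolding reach_def by simp

lemma reach_trans: "reach V F u v \<Longrightarrow> reach V F v w \<Longrightarrow> reach V F u w"
  unfolding reach_def by (rule rtranclp_trans)

lemma reach_edge: "x \<in> V \<Longrightarrow> y \<in> V \<Longrightarrow> {x,y} \<in> F \<Longrightarrow> reach V F x y"
  unfolding reach_def adj_def by (rule r_into_rtranclp) simp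

lemma reach_sym: "reach V F u v \<Longrightarrow> reach V F v u"
  unfolding reach_def
proof (induction rule: rtranclp_induct)
  case base then show ?case by simp
next
  case (step y z)
  then have "(\<lambda>x y. x \<in> V \<and> y \<in> V \<and> adj F x y) z y" using adj_sym by metis
  then show ?case using step(3) by (rule converse_rtranclp_into_rtranclp)
qed

lemma reach_in: "reach V F u v \<Longrightarrow> u \<noteq> v \<Longrightarrow> u \<in> V \<and> v \<in> V"
  unfolding reach_def
  by (induction rule: rtranclp_induct) (auto dest: tranclpD rtranclpD)

lemma reach_mono: "reach V F u v \<Longrightarrow> V \<subseteq> V' \<Longrightarrow> F \<subseteq> F' \<Longrightarrow> reach V' F' u v"
  unfolding reach_def
proof (induction rule: rtranclp_induct)
  case base then show ?case by simp
next
  case (step y z)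
  then show ?case unfolding adj_def
    by (metis (mono_tags, lifting) rtranclp.rtrancl_into_rtrancl subset_iff)
qed

lemma has_cycle_mono: "has_cycle F \<Longrightarrow> F \<subseteq> F' \<Longrightarrow> has_cycle F'"
  unfolding has_cycle_def adj_def by blast

lemma rp_idx: "rtrancl_path r x xs y \<Longrightarrow> (\<forall>i<length xs. r ((x#xs)!i) ((x#xs)!Suc i)) \<and> last (x#xs) = y"
proof (induction rule: rtrancl_path.induct)
  case (base x) then show ?case by simp
next
  case (step x y ys z)
  show ?case
  proof (intro conjI allI impI)
    fix i assume "i < length (y#ys)"
    then show "r ((x # y # ys) ! i) ((x # y # ys) ! Suc i)"
      using step by (cases i) auto
  next
    show "last (x # y # ys) = z" using step by simp
  qed
qed

lemma path_cycle:
  assumes "reach V F x y" "x \<noteq> y" "{x,y} \<notin> F"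
  shows "has_cycle (insert {x,y} F)"
proof -
  obtain xs0 where "rtrancl_path (\<lambda>x y. x \<in> V \<and> y \<in> V \<and> adj F x y) x xs0 y"
    using assms(1) unfolding reach_def rtranclp_eq_rtrancl_path by blast
  then obtain xs where p: "rtrancl_path (\<lambda>x y. x \<in> V \<and> y \<in> V \<and> adj F x y) x xs y"
    and d: "distinct (x#xs)" by (rule rtrancl_path_distinct)
  note pi = rp_idx[OF p]
  have "xs \<noteq> []" using pi assms(2) by auto
  moreover have "xs \<noteq> [y]"
  proof
    assume "xs = [y]"
    then have "adj F x y" using pi by auto
    then show False using assms(3) unfolding adj_def by simp
  qed
  moreover have "xs \<noteq> [] \<Longrightarrow> last xs = y" using pi by simp
  ultimately have len: "length (x#xs) \<ge> 3"
  proof (cases xs)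
    case (Cons a t)
    assume h: "xs \<noteq> []" "xs \<noteq> [y]" "xs \<noteq> [] \<Longrightarrow> last xs = y"
    then show ?thesis using Cons by (cases t) auto
  qed simp
  show ?thesis unfolding has_cycle_def
  proof (intro exI[of _ "x#xs"] conjI len d allI impI)
    fix i assume "i < length (x#xs) - 1"
    then show "adj (insert {x, y} F) ((x # xs) ! i) ((x # xs) ! Suc i)"
      using pi unfolding adj_def by auto
  next
    show "adj (insert {x, y} F) (last (x # xs)) (hd (x # xs))"
      using pi unfolding adj_def by (auto simp: insert_commute)
  qed
qed


lemma seg_reach:
  assumes "\<forall>j. a \<le> j \<and> j < b \<longrightarrow> adj F (vs!j) (vs!Suc j)" "set vs \<subseteq> V" "b < length vs" "a \<le> b"
  shows "reach V F (vs!a) (vs!b)"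
  using assms
proof (induction b)
  case 0 then show ?case by simp
next
  case (Suc b)
  show ?case
  proof (cases "a = Suc b")
    case True then show ?thesis by simp
  next
    case False
    then have "reach V F (vs!a) (vs!b)" using Suc by auto
    moreover have "reach V F (vs!b) (vs!Suc b)"
      using Suc.prems False unfolding reach_def adj_def
      by (intro r_into_rtranclp) (auto simp: adj_def)
    ultimately show ?thesis by (rule reach_trans)
  qed
qed




lemma cycle_edge:
  assumes T: "\<forall>e\<in>T. e \<subseteq> V" and nc: "\<not> has_cycle T" and xy: "x \<in> V" "y \<in> V"
    and c: "has_cycle (insert {x,y} T)"
  shows "reach V T x y"
proof -
  obtain vs where len: "length vs \<ge> 3" and d: "distinct vs"
    and cons: "\<forall>i < length vs - 1. adj (insert {x,y} T) (vs ! i) (vs ! Suc i)"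
    and cl: "adj (insert {x,y} T) (last vs) (hd vs)"
    using c unfolding has_cycle_def by blast
  define m where "m = length vs"
  have hd: "hd vs = vs!0" using len by (cases vs) auto
  have lst: "last vs = vs!(m-1)" using len unfolding m_def by (subst last_conv_nth) auto
  have sv: "set vs \<subseteq> V"
  proof
    fix v assume "v \<in> set vs"
    then obtain i where i: "i < m" "v = vs!i" unfolding m_def by (metis in_set_conv_nth)
    show "v \<in> V"
    proof (cases "i < m - 1")
      case True
      then have "{vs!i, vs!Suc i} \<in> insert {x,y} T" using cons unfolding adj_def m_def by auto
      then show ?thesis using T xy i by auto
    next
      case False
      then have "i = m - 1" using i by simp
      then have "{vs!i, vs!0} \<in> insert {x,y} T" using cl hd lst unfolding adj_def by simp
      then show ?thesis using T xy i by auto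
    qed
  qed
  have neq: "vs!i \<noteq> vs!j" if "i < m" "j < m" "i \<noteq> j" for i j
    using d that unfolding m_def by (simp add: nth_eq_iff_index_eq)
  have inj: "a = b" if "vs!a = vs!b" "a < m" "b < m" for a b
    using neq that by blast
  show ?thesis
  proof (cases "\<forall>i<m-1. adj T (vs!i) (vs!Suc i)")
    case True
    have "\<not> adj T (last vs) (hd vs)"
      using nc True len d unfolding has_cycle_def m_def by blast
    then have e: "{vs!(m-1), vs!0} = {x,y}" using cl hd lst unfolding adj_def by simp
    have r: "reach V T (vs!0) (vs!(m-1))"
      by (rule seg_reach) (use True sv len in \<open>auto simp: m_def\<close>)
    from e have "(x = vs!(m-1) \<and> y = vs!0) \<or> (x = vs!0 \<and> y = vs!(m-1))"
      by (auto simp: doubleton_eq_iff)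
    then show ?thesis using r reach_sym by metis
  next
    case False
    then obtain i where i: "i < m - 1" "\<not> adj T (vs!i) (vs!Suc i)" by blast
    then have e: "{vs!i, vs!Suc i} = {x,y}" using cons unfolding adj_def m_def by force
    have oth: "adj T (vs!j) (vs!Suc j)" if "j < m - 1" "j \<noteq> i" for j
    proof -
      have "{vs!j, vs!Suc j} \<noteq> {vs!i, vs!Suc i}"
        using that i by (auto simp: doubleton_eq_iff dest!: inj)
      then show ?thesis using cons that e unfolding adj_def m_def by auto
    qed
    have "{vs!(m-1), vs!0} \<noteq> {vs!i, vs!Suc i}"
      using i len unfolding m_def by (auto simp: doubleton_eq_iff m_def dest!: inj)
    then have clT: "adj T (vs!(m-1)) (vs!0)" using cl hd lst e unfolding adj_def by auto
    have r1: "reach V T (vs!Suc i) (vs!(m-1))"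
      by (rule seg_reach) (use oth sv len i in \<open>auto simp: m_def\<close>)
    have r2: "reach V T (vs!(m-1)) (vs!0)"
    proof (rule reach_edge)
      have "0 < m" "m - 1 < m" using len unfolding m_def by auto
      then show "vs!(m-1) \<in> V" "vs!0 \<in> V" using sv unfolding m_def by (meson nth_mem subsetD)+
      show "{vs!(m-1), vs!0} \<in> T" using clT unfolding adj_def .
    qed
    have r3: "reach V T (vs!0) (vs!i)"
      by (rule seg_reach) (use oth sv len i in \<open>auto simp: m_def\<close>)
    have "reach V T (vs!Suc i) (vs!i)" using r1 r2 r3 reach_trans by metis
    from e have "(x = vs!i \<and> y = vs!Suc i) \<or> (x = vs!Suc i \<and> y = vs!i)"
      by (auto simp: doubleton_eq_iff)
    then show ?thesis using \<open>reach V T (vs!Suc i) (vs!i)\<close> reach_sym by metis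
  qed
qed




lemma reach_induct[consumes 1, case_names base step]:
  assumes "reach V F u v" "P u"
    "\<And>a b. reach V F u a \<Longrightarrow> a \<in> V \<Longrightarrow> b \<in> V \<Longrightarrow> {a,b} \<in> F \<Longrightarrow> P a \<Longrightarrow> P b"
  shows "P v"
  using assms(1) unfolding reach_def
proof (induction rule: rtranclp_induct)
  case base then show ?case using assms(2) by simp
next
  case (step a b)
  then show ?case using assms(3)[of a b] unfolding reach_def adj_def by blast
qed

lemma reach_insert:
  assumes "reach V (insert {x,y} F) u v"
  shows "reach V F u v \<or> (reach V F u x \<and> reach V F y v) \<or> (reach V F u y \<and> reach V F x v)"
  using assms
proof (induction rule: reach_induct)
  case base then show ?case by simp
next
  case (step a b)
  show ?case
  proof (cases "{a,b} \<in> F")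
    case True
    then have "reach V F a b" using step reach_edge by metis
    then show ?thesis using step(5) reach_trans by metis
  next
    case False
    then have "(a = x \<and> b = y) \<or> (a = y \<and> b = x)" using step(4) by (auto simp: doubleton_eq_iff)
    then show ?thesis using step(5) reach_refl[of V F] reach_trans[of V F] by blast
  qed
qed




definition cls :: "'a set \<Rightarrow> 'a set set \<Rightarrow> 'a \<Rightarrow> 'a set" where
  "cls V F u = {v \<in> V. reach V F u v}"

definition comps :: "'a set \<Rightarrow> 'a set set \<Rightarrow> 'a set set" where
  "comps V F = cls V F ` V"

lemma cls_eq: "u \<in> V \<Longrightarrow> w \<in> cls V F u \<Longrightarrow> cls V F w = cls V F u"
  unfolding cls_def by (auto intro: reach_trans reach_sym)




lemma comp_count:
  assumes "finite V" "finite F" "\<forall>e\<in>F. e \<subseteq> V \<and> card e = 2" "\<not> has_cycle F"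
  shows "card F + card (comps V F) = card V"
  using assms(2,3,4)
proof (induction F rule: finite_induct)
  case empty
  have "reach V {} u v \<longleftrightarrow> u = v" for u v
  proof
    assume "reach V {} u v" then show "u = v"
      by (induction rule: reach_induct) auto
  qed simp
  then have "comps V {} = (\<lambda>u. {u}) ` V" unfolding comps_def cls_def by auto
  then show ?case by (simp add: card_image)
next
  case (insert e F)
  have "card e = 2" using insert(4) by simp
  then obtain x y where e: "e = {x,y}" "x \<noteq> y" by (auto simp: card_2_iff)
  have xy: "x \<in> V" "y \<in> V" using insert(4) e by auto
  have nc: "\<not> has_cycle F" using insert(5) has_cycle_mono by blast
  have IH: "card F + card (comps V F) = card V"
    by (rule insert.IH) (use insert.prems(1) nc in auto)
  have nr: "\<not> reach V F x y"
  proof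
    assume "reach V F x y"
    then have "has_cycle (insert {x,y} F)" using path_cycle[of V F x y] insert(2) e by blast
    then show False using insert.prems(2) e by simp
  qed
  define C where "C = cls V F"
  define C' where "C' = cls V (insert e F)"
  have Cx: "x \<in> C x" "y \<in> C y" unfolding C_def cls_def using xy by auto
  have Cne: "C x \<noteq> C y"
  proof
    assume "C x = C y"
    then have "y \<in> C x" using Cx by simp
    then show False using nr unfolding C_def cls_def by simp
  qed
  have C'u: "C' u = (if u \<in> C x \<union> C y then C x \<union> C y else C u)" if "u \<in> V" for u
  proof -
    have r: "reach V (insert e F) u v \<longleftrightarrow> reach V F u v \<or> (reach V F u x \<and> reach V F y v) \<or> (reach V F u y \<and> reach V F x v)" for v
    proof
      assume "reach V (insert e F) u v" then show "reach V F u v \<or> (reach V F u x \<and> reach V F y v) \<or> (reach V F u y \<and> reach V F x v)"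
        using reach_insert e by metis
    next
      have ey: "reach V (insert e F) x y" "reach V (insert e F) y x"
        using e xy reach_edge[of x V y "insert e F"] reach_edge[of y V x "insert e F"] by (auto simp: insert_commute)
      assume "reach V F u v \<or> (reach V F u x \<and> reach V F y v) \<or> (reach V F u y \<and> reach V F x v)"
      then show "reach V (insert e F) u v"
      proof -
        have m: "reach V (insert e F) a b" if "reach V F a b" for a b
          using that by (rule reach_mono) auto
        show ?thesis using \<open>reach V F u v \<or> _\<close>
          by (elim disjE conjE) (metis m ey reach_trans)+
      qed
    qed
    have sy: "reach V F a b \<longleftrightarrow> reach V F b a" for a b using reach_sym by metis
    show ?thesis
    proof (cases "u \<in> C x \<union> C y")
      case True
      then have "reach V F u x \<or> reach V F u y" unfolding C_def cls_def using sy by auto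
      then have "reach V (insert e F) u v \<longleftrightarrow> v \<in> C x \<union> C y" if "v \<in> V" for v
        unfolding r C_def cls_def using that Cne nr
        by (metis (no_types, lifting) mem_Collect_eq reach_trans sy Un_iff)
      then show ?thesis using True unfolding C'_def cls_def by (auto simp: C_def cls_def)
    next
      case False
      then have "\<not> reach V F u x" "\<not> reach V F u y" unfolding C_def cls_def using sy xy \<open>u \<in> V\<close> by auto
      then have "reach V (insert e F) u v \<longleftrightarrow> reach V F u v" for v
        unfolding r by blast
      then show ?thesis using False unfolding C'_def C_def cls_def by auto
    qed
  qed
  have cx: "C x \<in> comps V F" "C y \<in> comps V F" using xy unfolding C_def comps_def by auto
  have eq: "comps V (insert e F) = insert (C x \<union> C y) (comps V F - {C x, C y})"
  proof
    show "comps V (insert e F) \<subseteq> insert (C x \<union> C y) (comps V F - {C x, C y})"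
    proof
      fix S assume "S \<in> comps V (insert e F)"
      then obtain u where u: "u \<in> V" "S = C' u" unfolding comps_def C'_def by auto
      show "S \<in> insert (C x \<union> C y) (comps V F - {C x, C y})"
      proof (cases "u \<in> C x \<union> C y")
        case True then show ?thesis using C'u u by simp
      next
        case False
        have "u \<in> C u" using u unfolding C_def cls_def by simp
        then have "C u \<noteq> C x" "C u \<noteq> C y" using False by auto
        then show ?thesis using C'u u False unfolding comps_def C_def by auto
      qed
    qed
  next
    show "insert (C x \<union> C y) (comps V F - {C x, C y}) \<subseteq> comps V (insert e F)"
    proof
      fix S assume S: "S \<in> insert (C x \<union> C y) (comps V F - {C x, C y})"
      show "S \<in> comps V (insert e F)"
      proof (cases "S = C x \<union> C y")
        case True
        then have "S = C' x" using C'u xy Cx by simp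
        then show ?thesis using xy unfolding comps_def C'_def by auto
      next
        case False
        then obtain u where u: "u \<in> V" "S = C u" "C u \<noteq> C x" "C u \<noteq> C y"
          using S unfolding comps_def C_def by blast
        have "u \<notin> C x" using u cls_eq[of x V u F] xy unfolding C_def by metis
        have "u \<notin> C y" using u cls_eq[of y V u F] xy unfolding C_def by metis
        have "S = C' u" using C'u u \<open>u \<notin> C x\<close> \<open>u \<notin> C y\<close> by simp
        then show ?thesis using u unfolding comps_def C'_def by auto
      qed
    qed
  qed
  have fin: "finite (comps V F)" unfolding comps_def using assms(1) by simp
  have "C x \<union> C y \<notin> comps V F - {C x, C y}"
  proof
    assume "C x \<union> C y \<in> comps V F - {C x, C y}"
    then obtain u where u: "u \<in> V" "C x \<union> C y = C u" "C u \<noteq> C x" unfolding comps_def C_def by auto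
    then have "x \<in> C u" using Cx by auto
    then show False using cls_eq[of u V x F] u unfolding C_def by auto
  qed
  then have "card (comps V (insert e F)) = Suc (card (comps V F - {C x, C y}))"
    unfolding eq using fin by (intro card_insert_disjoint) auto
  moreover have c2: "card {C x, C y} = 2" using Cne by simp
  moreover have sub: "{C x, C y} \<subseteq> comps V F" using cx by auto
  moreover have "card (comps V F - {C x, C y}) = card (comps V F) - card {C x, C y}"
    using sub by (simp add: card_Diff_subset)
  moreover have "card {C x, C y} \<le> card (comps V F)"
    using card_mono fin sub by blast
  ultimately show ?case using IH card_insert_disjoint[OF insert(1) insert(2)] by linarith
qed




lemma extend_tree:
  assumes sg: "simple_graph V E" and conn: "graph_connected V E"
    and FE: "F \<subseteq> E" and nc: "\<not> has_cycle F"
  shows "\<exists>T. spanning_tree_of E V T \<and> F \<subseteq> T"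
proof -
  have finV: "finite V" and EV: "\<forall>e\<in>E. e \<subseteq> V \<and> card e = 2" using sg unfolding simple_graph_def by auto
  have "E \<subseteq> Pow V" using EV by auto
  then have finE: "finite E" using finV finite_subset by blast
  define S where "S = {T. F \<subseteq> T \<and> T \<subseteq> E \<and> \<not> has_cycle T}"
  have "S \<subseteq> Pow E" unfolding S_def by auto
  then have finS: "finite S" using finE finite_subset by blast
  have "F \<in> S" unfolding S_def using FE nc by auto
  then have ne: "card ` S \<noteq> {}" by auto
  obtain T where TS: "T \<in> S" and Tm: "card T = Max (card ` S)"
    using Max_in[OF finite_imageI[OF finS] ne] by auto
  have max: "card T' \<le> card T" if "T' \<in> S" for T'
    using Tm Max_ge[OF finite_imageI[OF finS]] that by auto
  have TE: "T \<subseteq> E" "F \<subseteq> T" "\<not> has_cycle T" using TS unfolding S_def by auto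
  have finT: "finite T" using TE finE finite_subset by auto
  have TV: "\<forall>e\<in>T. e \<subseteq> V" using TE EV by auto
  have "graph_connected V T" unfolding graph_connected_reach
  proof (intro conjI ballI)
    show "V \<noteq> {}" using conn unfolding graph_connected_def by simp
  next
    fix u v assume uv: "u \<in> V" "v \<in> V"
    show "reach V T u v"
    proof (rule ccontr)
      assume nr: "\<not> reach V T u v"
      have "reach V E u v" using conn uv unfolding graph_connected_reach by auto
      then have "reach V T u v \<or> (\<exists>a b. a \<in> V \<and> b \<in> V \<and> {a,b} \<in> E \<and> reach V T u a \<and> \<not> reach V T u b)"
      proof (induction rule: reach_induct)
        case base then show ?case by simp
      next
        case (step a b)
        show ?case
        proof (cases "reach V T u b")
          case False
          from step(5) show ?thesis
          proof
            assume "reach V T u a" then show ?thesis using step(2-4) False by blast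
          qed blast
        qed simp
      qed
      then obtain a b where ab: "a \<in> V" "b \<in> V" "{a,b} \<in> E" "reach V T u a" "\<not> reach V T u b"
        using nr by blast
      have nab: "\<not> reach V T a b"
      proof
        assume "reach V T a b" then have "reach V T u b" by (rule reach_trans[OF ab(4)])
        then show False using ab(5) by simp
      qed
      have abT: "{a,b} \<notin> T"
      proof
        assume "{a,b} \<in> T" then have "reach V T a b" by (rule reach_edge[OF ab(1,2)])
        then show False using nab by simp
      qed
      have "\<not> has_cycle (insert {a,b} T)"
        using cycle_edge[OF TV TE(3) ab(1,2)] nab by blast
      then have "insert {a,b} T \<in> S" unfolding S_def using TE ab(3) by blast
      then have "card (insert {a,b} T) \<le> card T" by (rule max)
      then show False using abT finT card_insert_disjoint by fastforce
    qed
  qed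
  then have "spanning_tree_of E V T" unfolding spanning_tree_of_def using TE EV by blast
  then show ?thesis using TE by blast
qed

lemma tree_card:
  assumes sg: "simple_graph V E" and T: "spanning_tree_of E V T"
  shows "card T + 1 = card V"
proof -
  have finV: "finite V" and EV: "\<forall>e\<in>E. e \<subseteq> V \<and> card e = 2" using sg unfolding simple_graph_def by auto
  have TE: "T \<subseteq> E" "graph_connected V T" "\<not> has_cycle T" using T unfolding spanning_tree_of_def by auto
  have "T \<subseteq> Pow V" using TE EV by auto
  then have finT: "finite T" using finV finite_subset by blast
  have "comps V T = {V}"
  proof -
    have "cls V T u = V" if "u \<in> V" for u
      using TE(2) that unfolding graph_connected_reach cls_def by auto
    moreover have "V \<noteq> {}" using TE(2) unfolding graph_connected_def by simp
    ultimately show ?thesis unfolding comps_def by auto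
  qed
  then show ?thesis using comp_count[OF finV finT] TE EV by auto
qed




locale forest_setup =
  fixes V :: "'a set" and E :: "'a set set" and \<P> :: "'a set set" and f :: "'a set \<Rightarrow> 'a set set"
  assumes sg: "simple_graph V E" and part: "partition_on V \<P>"
    and trees: "\<And>P. P \<in> \<P> \<Longrightarrow> spanning_tree_of E P (f P)"
begin

definition "FF = \<Union>(f ` \<P>)"

lemma EV: "\<forall>e\<in>E. e \<subseteq> V \<and> card e = 2" using sg unfolding simple_graph_def by auto
lemma finV: "finite V" using sg unfolding simple_graph_def by auto

lemma PV: "P \<in> \<P> \<Longrightarrow> P \<subseteq> V" using partition_onD1[OF part] by auto

lemma fP: "P \<in> \<P> \<Longrightarrow> f P \<subseteq> {e \<in> E. e \<subseteq> P}"
  using trees unfolding spanning_tree_of_def by blast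

lemma disj: "P \<in> \<P> \<Longrightarrow> Q \<in> \<P> \<Longrightarrow> a \<in> P \<Longrightarrow> a \<in> Q \<Longrightarrow> P = Q"
  using partition_onD2[OF part] unfolding disjoint_def by blast

lemma FF_E: "FF \<subseteq> E" unfolding FF_def using fP by blast

lemma FF_V: "\<forall>e\<in>FF. e \<subseteq> V \<and> card e = 2" using FF_E EV by blast

lemma edge_part:
  assumes "{a,b} \<in> FF" "a \<in> P" "P \<in> \<P>"
  shows "{a,b} \<in> f P"
proof -
  obtain Q where Q: "Q \<in> \<P>" "{a,b} \<in> f Q" using assms(1) unfolding FF_def by blast
  then have "a \<in> Q" using fP by blast
  then have "Q = P" using disj[OF Q(1) assms(3)] assms(2) by blast
  then show ?thesis using Q by simp
qed

lemma edge_part2: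
  assumes "{a,b} \<in> FF" "a \<in> P" "P \<in> \<P>"
  shows "b \<in> P"
  using edge_part[OF assms] fP[OF assms(3)] by blast

lemma reach_part:
  assumes "reach V FF u v" "u \<in> P" "P \<in> \<P>"
  shows "v \<in> P"
  using assms(1)
proof (induction rule: reach_induct)
  case base then show ?case using assms(2) .
next
  case (step a b) then show ?case using edge_part2 assms(3) by blast
qed

lemma part_reach:
  assumes "u \<in> P" "v \<in> P" "P \<in> \<P>"
  shows "reach V FF u v"
proof -
  have "graph_connected P (f P)" using trees[OF assms(3)] unfolding spanning_tree_of_def by blast
  then have "reach P (f P) u v" using assms unfolding graph_connected_reach by blast
  moreover have "f P \<subseteq> FF" using assms(3) unfolding FF_def by blast
  ultimately show ?thesis using reach_mono[of P "f P" u v V FF] PV[OF assms(3)] by blast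
qed

lemma cls_part:
  assumes "u \<in> P" "P \<in> \<P>" shows "cls V FF u = P"
proof
  show "cls V FF u \<subseteq> P" unfolding cls_def using reach_part[OF _ assms] by blast
  show "P \<subseteq> cls V FF u" unfolding cls_def using part_reach[OF assms(1) _ assms(2)] PV[OF assms(2)] by blast
qed

lemma comps_FF: "comps V FF = \<P>"
proof
  show "comps V FF \<subseteq> \<P>"
  proof
    fix S assume "S \<in> comps V FF"
    then obtain u where u: "u \<in> V" "S = cls V FF u" unfolding comps_def by blast
    then obtain P where "P \<in> \<P>" "u \<in> P" using partition_onD1[OF part] by blast
    then show "S \<in> \<P>" using cls_part u by simp
  qed
next
  show "\<P> \<subseteq> comps V FF"
  proof
    fix P assume P: "P \<in> \<P>"
    then obtain u where "u \<in> P" using partition_onD3[OF part] by (metis all_not_in_conv)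
    then have "P = cls V FF u" "u \<in> V" using cls_part P PV by auto
    then show "P \<in> comps V FF" unfolding comps_def by blast
  qed
qed

lemma fP_eq: "P \<in> \<P> \<Longrightarrow> f P = {e \<in> FF. e \<subseteq> P}"
proof
  assume P: "P \<in> \<P>"
  show "f P \<subseteq> {e \<in> FF. e \<subseteq> P}" using fP[OF P] P unfolding FF_def by blast
  show "{e \<in> FF. e \<subseteq> P} \<subseteq> f P"
  proof
    fix e assume e: "e \<in> {e \<in> FF. e \<subseteq> P}"
    then have "card e = 2" using FF_V by blast
    then obtain a b where ab: "e = {a,b}" by (auto simp: card_2_iff)
    then show "e \<in> f P" using edge_part[of a b P] e P by blast
  qed
qed

lemma FF_acyclic: "\<not> has_cycle FF"
proof
  assume "has_cycle FF"
  then obtain vs where len: "length vs \<ge> 3" and d: "distinct vs"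
    and cons: "\<forall>i < length vs - 1. adj FF (vs ! i) (vs ! Suc i)"
    and cl: "adj FF (last vs) (hd vs)"
    unfolding has_cycle_def by blast
  have "{vs!0, vs!1} \<in> FF" using cons len unfolding adj_def by auto
  then have "vs!0 \<in> V" using FF_V by blast
  then obtain P where P: "P \<in> \<P>" "vs!0 \<in> P" using partition_onD1[OF part] by blast
  have inP: "i < length vs \<Longrightarrow> vs!i \<in> P" for i
  proof (induction i)
    case 0 then show ?case using P by simp
  next
    case (Suc i)
    then have "{vs!i, vs!Suc i} \<in> FF" using cons unfolding adj_def by auto
    then show ?case using edge_part2 Suc P(1) by simp
  qed
  have "has_cycle (f P)" unfolding has_cycle_def
  proof (intro exI[of _ vs] conjI len d allI impI)
    fix i assume i: "i < length vs - 1"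
    then show "adj (f P) (vs ! i) (vs ! Suc i)"
      using cons edge_part[of "vs!i" "vs!Suc i" P] inP[of i] P(1) unfolding adj_def by auto
  next
    have "last vs = vs ! (length vs - 1)" using len by (subst last_conv_nth) auto
    then have "last vs \<in> P" using inP[of "length vs - 1"] len by simp
    then show "adj (f P) (last vs) (hd vs)"
      using cl edge_part P(1) unfolding adj_def by blast
  qed
  then show False using trees[OF P(1)] unfolding spanning_tree_of_def by blast
qed

lemma FF_card: "card FF + card \<P> = card V"
proof -
  have "FF \<subseteq> Pow V" using FF_V by auto
  then have "finite FF" using finV finite_subset by blast
  then show ?thesis using comp_count[OF finV _ FF_V FF_acyclic] comps_FF by simp
qed

end




lemma forest_props:
  assumes "forest_setup V E \<P> f"
  shows "comps V (\<Union>(f ` \<P>)) = \<P> \<and> \<not> has_cycle (\<Union>(f ` \<P>))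
    \<and> (\<forall>P\<in>\<P>. f P = {e \<in> \<Union>(f ` \<P>). e \<subseteq> P}) \<and> card (\<Union>(f ` \<P>)) + card \<P> = card V
    \<and> \<Union>(f ` \<P>) \<subseteq> E"
proof -
  interpret forest_setup V E \<P> f by fact
  show ?thesis using comps_FF FF_acyclic fP_eq FF_card FF_E unfolding FF_def by blast
qed

theorem lemma5p1:
  fixes V :: "'a set" and E :: "'a set set" and n k :: nat
  assumes "simple_graph V E" and "graph_connected V E"
    and "card V = n" and "1 \<le> k" and "k \<le> n"
  shows "Z_mu_star V E k \<le> ((n - 1) choose (k - 1)) * num_spanning_trees E V
       \<and> ((n - 1) choose (k - 1)) * num_spanning_trees E V \<le> n ^ (k - 1) * num_spanning_trees E V"
proof
  have finV: "finite V" and EV: "\<forall>e\<in>E. e \<subseteq> V \<and> card e = 2"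
    using assms(1) unfolding simple_graph_def by auto
  have "E \<subseteq> Pow V" using EV by auto
  then have finE: "finite E" using finV finite_subset by blast
  define trees where "trees P = {F. spanning_tree_of E P F}" for P
  define Parts where "Parts = {\<P>. partition_on V \<P> \<and> card \<P> = k}"
  define A where "A = Sigma Parts (\<lambda>\<P>. PiE \<P> trees)"
  define B where "B = (\<Union>T\<in>trees V. {S. S \<subseteq> T \<and> card S = n - k})"
  define g where "g = (\<lambda>(\<P>::'a set set, f::'a set \<Rightarrow> 'a set set). \<Union>(f ` \<P>))"
  have fintrees: "finite (trees P)" for P
  proof -
    have "trees P \<subseteq> Pow E" unfolding trees_def spanning_tree_of_def by auto
    then show ?thesis using finE finite_subset by blast
  qed
  have finParts: "finite Parts"
  proof -
    have "Parts \<subseteq> Pow (Pow V)" unfolding Parts_def using partition_onD1 by fastforce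
    then show ?thesis using finV finite_subset by blast
  qed
  have finP: "finite \<P>" if "\<P> \<in> Parts" for \<P>
    using finite_elements[OF finV] that unfolding Parts_def by blast
  have Z: "Z_mu_star V E k = card A"
  proof -
    have "Z_mu_star V E k = (\<Sum>\<P>\<in>Parts. \<Prod>P\<in>\<P>. card (trees P))"
      unfolding Z_mu_star_def Parts_def num_spanning_trees_def trees_def by simp
    also have "\<dots> = (\<Sum>\<P>\<in>Parts. card (PiE \<P> trees))"
      by (rule sum.cong) (simp_all add: card_PiE finP)
    also have "\<dots> = card A" unfolding A_def
      using finParts fintrees finP by (subst card_SigmaI) (auto intro: finite_PiE)
    finally show ?thesis .
  qed
  have FS: "forest_setup V E \<P> f" if "(\<P>, f) \<in> A" for \<P> f
    using that assms(1) unfolding A_def Parts_def trees_def forest_setup_def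
    by (auto dest: PiE_mem)
  have inj: "inj_on g A"
  proof (rule inj_onI)
    fix x y assume x: "x \<in> A" and y: "y \<in> A" and gxy: "g x = g y"
    obtain \<P> f where xe: "x = (\<P>, f)" by (cases x)
    obtain \<P>' f' where ye: "y = (\<P>', f')" by (cases y)
    note px = forest_props[OF FS[OF x[unfolded xe]]]
    note py = forest_props[OF FS[OF y[unfolded ye]]]
    have U: "\<Union>(f ` \<P>) = \<Union>(f' ` \<P>')" using gxy unfolding xe ye g_def by simp
    have PP: "\<P> = \<P>'" using px[THEN conjunct1] py[THEN conjunct1] U by simp
    have fe: "f P = f' P" if "P \<in> \<P>" for P
    proof -
      have "f P = {e \<in> \<Union>(f ` \<P>). e \<subseteq> P}" using px[THEN conjunct2, THEN conjunct2, THEN conjunct1] that by blast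
      also have "\<dots> = {e \<in> \<Union>(f' ` \<P>'). e \<subseteq> P}" using U by simp
      also have "\<dots> = f' P" using py[THEN conjunct2, THEN conjunct2, THEN conjunct1] that PP by blast
      finally show ?thesis .
    qed
    have "f \<in> PiE \<P> trees" "f' \<in> PiE \<P> trees" using x y unfolding xe ye A_def PP by auto
    then have "f = f'" using fe by (rule PiE_ext)
    then show "x = y" using xe ye PP by simp
  qed
  have gAB: "g ` A \<subseteq> B"
  proof
    fix F assume "F \<in> g ` A"
    then obtain \<P> f where x: "(\<P>, f) \<in> A" and F: "F = \<Union>(f ` \<P>)" unfolding g_def by auto
    note p = forest_props[OF FS[OF x]]
    have "card \<P> = k" using x unfolding A_def Parts_def by auto
    moreover have "card (\<Union>(f ` \<P>)) + card \<P> = card V" using p[THEN conjunct2, THEN conjunct2, THEN conjunct2, THEN conjunct1] .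
    ultimately have cF: "card F = n - k" using assms(3) F by simp
    obtain T where T: "spanning_tree_of E V T" "F \<subseteq> T"
      using extend_tree[OF assms(1,2) p[THEN conjunct2, THEN conjunct2, THEN conjunct2, THEN conjunct2] p[THEN conjunct2, THEN conjunct1]] F by blast
    then show "F \<in> B" unfolding B_def trees_def using cF by blast
  qed
  have finB: "finite B"
  proof -
    have "B \<subseteq> Pow E" unfolding B_def trees_def spanning_tree_of_def by auto
    then show ?thesis using finE finite_subset by blast
  qed
  have tcard: "card T = n - 1" if "T \<in> trees V" for T
    using tree_card[OF assms(1)] that assms(3) unfolding trees_def by fastforce
  have "card A \<le> card B" using card_inj_on_le[OF inj gAB finB] .
  also have "card B \<le> (\<Sum>T\<in>trees V. card {S. S \<subseteq> T \<and> card S = n - k})"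
    unfolding B_def by (rule card_UN_le[OF fintrees])
  also have "\<dots> = (\<Sum>T\<in>trees V. (n - 1) choose (n - k))"
  proof (rule sum.cong)
    fix T assume T: "T \<in> trees V"
    have "T \<subseteq> E" using T unfolding trees_def spanning_tree_of_def by blast
    then have "finite T" using finE by (rule finite_subset)
    then show "card {S. S \<subseteq> T \<and> card S = n - k} = (n - 1) choose (n - k)"
      using n_subsets[OF \<open>finite T\<close>, of "n - k"] tcard[OF T] by simp
  qed simp
  also have "\<dots> = ((n - 1) choose (k - 1)) * num_spanning_trees E V"
  proof -
    have "(n - 1) choose (k - 1) = (n - 1) choose (n - 1 - (k - 1))"
      using assms(4,5) by (intro binomial_symmetric) simp
    also have "n - 1 - (k - 1) = n - k" using assms(4,5) by simp
    finally show ?thesis unfolding num_spanning_trees_def trees_def by simp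
  qed
  finally show "Z_mu_star V E k \<le> ((n - 1) choose (k - 1)) * num_spanning_trees E V"
    using Z by simp
next
  have "(n - 1) choose (k - 1) \<le> (n - 1) ^ (k - 1)"
    using assms(4,5) by (intro binomial_le_pow) simp
  also have "\<dots> \<le> n ^ (k - 1)" by (intro power_mono) simp_all
  finally show "((n - 1) choose (k - 1)) * num_spanning_trees E V \<le> n ^ (k - 1) * num_spanning_trees E V"
    by (rule mult_right_mono) simp
qed


end
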